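(* Let $\mathbb{S}^2\subset\mathbb{R}^3$ be the unit sphere with its induced Euclidean metric, let $N=(0,0,1)$ and $S=(0,0,-1)$, and let $M=\mathbb{S}^2\setminus\{N,S\}$. Let $\vec v$ be a smooth unit vector field defined on $M$. If $k=\max\{I_{\vec v}(N),I_{\vec v}(S)\}$, then \[ \mathrm{vol}(\vec v)\ \ge\ \pi\, L(\varepsilon_k), \] where $L(\varepsilon_k)$ is the length of the ellipse $\varepsilon_k:\ \frac{x^2}{k^2}+\frac{y^2}{(k-2)^2}=1$, with $k>2$.
   Context: $I_{\vec v}(P)$ denotes the Poincaré index of $\vec v$ around the isolated singular point $P\in\{N,S\}$. The volume $\mathrm{vol}(\vec v)$ of the unit vector field is the area of the surface $\vec v(M)$ in the unit tangent bundle $T^1\mathbb{S}^2$ equipped with the Sasaki metric; equivalently, if $g$ is the round metric, $\nabla$ its Levi-Civita connection, $\nu$ the area form, and $\vec v^{\perp}$ is the unit vector field such that $\{\vec v^{\perp},\vec v\}$ is a positively oriented orthonormal frame, then \[ \mathrm{vol}(\vec v)=\int_M\sqrt{1+\gamma^2+\delta^2}\,\nu,\qquad \gamma=g(\nabla_{\vec v}\vec v,\vec v^{\perp}),\quad \delta=g(\nabla_{\vec v^{\perp}}\vec v^{\perp},\vec v). \] *)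

theory Defs
  imports "HOL-Analysis.Analysis" "HOL-Complex_Analysis.Complex_Analysis"
begin

primrec Ck_on :: "nat \<Rightarrow> 'a::euclidean_space set \<Rightarrow> ('a \<Rightarrow> 'b::real_normed_vector) \<Rightarrow> bool" where
  "Ck_on 0 U f = continuous_on U f"
| "Ck_on (Suc n) U f =
     ((\<forall>x\<in>U. f differentiable (at x)) \<and>
      (\<forall>i\<in>Basis. Ck_on n U (\<lambda>x. frechet_derivative f (at x) i)))"

definition smooth_on :: "'a::euclidean_space set \<Rightarrow> ('a \<Rightarrow> 'b::real_normed_vector) \<Rightarrow> bool" where
  "smooth_on U f \<longleftrightarrow> open U \<and> (\<forall>n. Ck_on n U f)"

definition sphere2 :: "(real^3) set" where
  "sphere2 = {p. norm p = 1}"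

definition northP :: "real^3" where "northP = vector [0, 0, 1]"
definition southP :: "real^3" where "southP = vector [0, 0, -1]"

definition Mset :: "(real^3) set" where
  "Mset = sphere2 - {northP, southP}"

definition smooth_unit_vf :: "(real^3 \<Rightarrow> real^3) \<Rightarrow> bool" where
  "smooth_unit_vf v \<longleftrightarrow>
     (\<exists>U. Mset \<subseteq> U \<and> smooth_on U v) \<and>
     (\<forall>p\<in>Mset. norm (v p) = 1 \<and> v p \<bullet> p = 0)"

text \<open>Chart around a pole: (x,y) \<mapsto> (x, y, s sqrt(1-x^2-y^2)), s = 1 at N, s = -1 at S.
  In the coordinate frame of this chart the components of a tangent vector w are
  (w$1, w$2). The index is the winding number around 0 of these components along
  a small positively oriented circle of radius r about the pole in the chart.\<close>
definition pole_loop :: "real \<Rightarrow> real \<Rightarrow> real \<Rightarrow> real^3" where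
  "pole_loop s r t = vector [r * cos (2*pi*t), r * sin (2*pi*t), s * sqrt (1 - r\<^sup>2)]"

definition poincare_index :: "(real^3 \<Rightarrow> real^3) \<Rightarrow> real^3 \<Rightarrow> int" where
  "poincare_index v P =
     (THE w::int. \<exists>e>0. \<forall>r. 0 < r \<and> r < e \<longrightarrow>
        winding_number (\<lambda>t. Complex (v (pole_loop (P$3) r t) $ 1) (v (pole_loop (P$3) r t) $ 2)) 0
          = of_int w)"

text \<open>Ambient derivative of v at p in direction w; for tangent w at p \<in> M this only
  depends on v restricted to M. Since the vectors paired below are tangent, the
  Levi-Civita connection of the round metric gives the same inner products.\<close>
definition Dv :: "(real^3 \<Rightarrow> real^3) \<Rightarrow> real^3 \<Rightarrow> real^3 \<Rightarrow> real^3" where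
  "Dv v p w = frechet_derivative v (at p) w"

text \<open>v_perp: {v_perp, v} positively oriented orthonormal (outward normal p), i.e. v_perp \<times> v = p.\<close>
definition vperp :: "(real^3 \<Rightarrow> real^3) \<Rightarrow> real^3 \<Rightarrow> real^3" where
  "vperp v p = cross3 (v p) p"

definition gamma_vf :: "(real^3 \<Rightarrow> real^3) \<Rightarrow> real^3 \<Rightarrow> real" where
  "gamma_vf v p = Dv v p (v p) \<bullet> vperp v p"

definition delta_vf :: "(real^3 \<Rightarrow> real^3) \<Rightarrow> real^3 \<Rightarrow> real" where
  "delta_vf v p = Dv (vperp v) p (vperp v p) \<bullet> v p"

definition sph :: "real \<times> real \<Rightarrow> real^3" where
  "sph x = vector [sin (fst x) * cos (snd x), sin (fst x) * sin (snd x), cos (fst x)]"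

definition sphere_nn_integral :: "(real^3 \<Rightarrow> real) \<Rightarrow> ennreal" where
  "sphere_nn_integral f =
     (\<integral>\<^sup>+ x. indicator ({0<..<pi} \<times> {0<..<2*pi}) x * ennreal (f (sph x) * sin (fst x)) \<partial>lborel)"

definition vol_vf :: "(real^3 \<Rightarrow> real^3) \<Rightarrow> ennreal" where
  "vol_vf v = sphere_nn_integral (\<lambda>p. sqrt (1 + (gamma_vf v p)\<^sup>2 + (delta_vf v p)\<^sup>2))"

definition ellipse_length :: "real \<Rightarrow> real \<Rightarrow> real" where
  "ellipse_length a b = integral {0..2*pi} (\<lambda>t. sqrt ((a * sin t)\<^sup>2 + (b * cos t)\<^sup>2))"

end

theory Submission
  imports Defs
begin

definition E1 :: "real \<Rightarrow> real \<Rightarrow> real^3" where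
  "E1 th ph = vector [cos th * cos ph, cos th * sin ph, - sin th]"
definition E2 :: "real \<Rightarrow> real^3" where
  "E2 ph = vector [- sin ph, cos ph, 0]"

lemma sph_comp: "sph (th,ph) $ 1 = sin th * cos ph" "sph (th,ph) $ 2 = sin th * sin ph"
   "sph (th,ph) $ 3 = cos th"
  by (simp_all add: sph_def)

lemma inner3: "(x::real^3) \<bullet> y = x$1*y$1 + x$2*y$2 + x$3*y$3"
  by (simp add: inner_vec_def sum_3)

lemma sc1: "sin x ^ 2 + cos x ^ 2 = (1::real)" by simp

lemma frame_inner:
  "E1 th ph \<bullet> E1 th ph = 1" "E2 ph \<bullet> E2 ph = 1" "sph (th,ph) \<bullet> sph (th,ph) = 1"
  "E1 th ph \<bullet> E2 ph = 0" "E1 th ph \<bullet> sph (th,ph) = 0" "E2 ph \<bullet> sph (th,ph) = 0"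
proof -
  have a: "sin th ^ 2 + cos th ^ 2 = 1" "sin ph ^ 2 + cos ph ^ 2 = 1" by simp_all
  show "E1 th ph \<bullet> E1 th ph = 1" "E2 ph \<bullet> E2 ph = 1" "sph (th,ph) \<bullet> sph (th,ph) = 1"
  "E1 th ph \<bullet> E2 ph = 0" "E1 th ph \<bullet> sph (th,ph) = 0" "E2 ph \<bullet> sph (th,ph) = 0"
    unfolding inner3 E1_def E2_def sph_def using a by (simp; algebra)+
qed

lemma frame_inner2:
  "E2 ph \<bullet> E1 th ph = 0" "sph (th,ph) \<bullet> E1 th ph = 0" "sph (th,ph) \<bullet> E2 ph = 0"
  using frame_inner by (simp_all add: inner_commute)

lemma norm_sph: "norm (sph x) = 1"
proof -
  obtain th ph where x: "x = (th,ph)" by fastforce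
  show ?thesis using frame_inner(3)[of th ph] by (simp add: x norm_eq_sqrt_inner)
qed

lemma frame_expand:
  "w = (w \<bullet> E1 th ph) *\<^sub>R E1 th ph + (w \<bullet> E2 ph) *\<^sub>R E2 ph + (w \<bullet> sph (th,ph)) *\<^sub>R sph (th,ph)"
proof -
  have a: "sin th ^ 2 + cos th ^ 2 = 1" "sin ph ^ 2 + cos ph ^ 2 = 1" by simp_all
  show ?thesis
  unfolding vec_eq_iff forall_3 inner3 E1_def E2_def sph_def using a
  by (simp; intro conjI; algebra)
qed

lemma cross_frame:
  "cross3 (a *\<^sub>R E1 th ph + b *\<^sub>R E2 ph) (sph (th,ph)) = b *\<^sub>R E1 th ph - a *\<^sub>R E2 ph"
proof -
  have a: "sin th ^ 2 + cos th ^ 2 = 1" "sin ph ^ 2 + cos ph ^ 2 = 1" by simp_all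
  show ?thesis
  unfolding vec_eq_iff forall_3 cross3_def E1_def E2_def sph_def using a
  by (simp; intro conjI; algebra)
qed


lemma bb_cross: "bounded_bilinear cross3"
  using bilinear_conv_bounded_bilinear bilinear_cross by blast

lemma vperp_deriv:
  assumes "v differentiable (at p)"
  shows "((vperp v) has_derivative
     (\<lambda>h. cross3 (v p) h + cross3 (frechet_derivative v (at p) h) p)) (at p)"
proof -
  have "(v has_derivative frechet_derivative v (at p)) (at p)"
    using assms frechet_derivative_works by blast
  from bounded_bilinear.FDERIV[OF bb_cross this has_derivative_ident]
  show ?thesis unfolding vperp_def[abs_def] by simp
qed

lemma cross_dot_swap: "(cross3 x p) \<bullet> w = - (x \<bullet> cross3 w p)"
  by (simp add: cross3_simps)

lemma pointwise_ineq:
  assumes th: "0 < th" "th < pi" and p: "p = sph (th,ph)"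
    and dv: "v differentiable (at p)" and nv: "norm (v p) = 1" and tv: "v p \<bullet> p = 0"
  shows "sqrt ((sin th)^2 + (Dv v p (sin th *\<^sub>R E2 ph) \<bullet> vperp v p)^2)
      \<le> sqrt (1 + (gamma_vf v p)^2 + (delta_vf v p)^2) * sin th"
proof -
  define L where "L = frechet_derivative v (at p)"
  have lin: "linear L" using dv linear_frechet_derivative L_def by blast
  define u where "u = vperp v p"
  define a where "a = v p \<bullet> E1 th ph"
  define b where "b = v p \<bullet> E2 ph"
  have vexp: "v p = a *\<^sub>R E1 th ph + b *\<^sub>R E2 ph"
    using frame_expand[of "v p" th ph] tv p a_def b_def by simp
  have uexp: "u = b *\<^sub>R E1 th ph - a *\<^sub>R E2 ph"
    unfolding u_def vperp_def using cross_frame[of a th ph b] vexp p by simp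
  have ab1: "a^2 + b^2 = 1"
  proof -
    have "v p \<bullet> v p = 1" using nv by (simp add: dot_square_norm)
    then show ?thesis unfolding vexp
      by (simp add: inner_add_left inner_add_right frame_inner frame_inner2 power2_eq_square)
  qed
  have E2exp: "E2 ph = b *\<^sub>R v p - a *\<^sub>R u"
  proof -
    have "b *\<^sub>R v p - a *\<^sub>R u = (a^2+b^2) *\<^sub>R E2 ph"
      unfolding vexp uexp by (simp add: algebra_simps power2_eq_square)
    then show ?thesis using ab1 by simp
  qed
  have gam: "gamma_vf v p = L (v p) \<bullet> u"
    unfolding gamma_vf_def Dv_def L_def u_def by simp
  have "Dv (vperp v) p = (\<lambda>h. cross3 (v p) h + cross3 (L h) p)"
    unfolding Dv_def L_def using frechet_derivative_at[OF vperp_deriv[OF dv]] by simp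
  then have del: "delta_vf v p = - (L u \<bullet> u)"
    unfolding delta_vf_def u_def[symmetric]
    by (simp add: inner_add_left dot_cross_self cross_dot_swap u_def vperp_def)
  have LE2: "L (E2 ph) \<bullet> u = b * gamma_vf v p + a * delta_vf v p"
    unfolding E2exp gam del using lin
    by (simp add: linear_diff linear_scale inner_diff_left)
  have cs: "(b * gamma_vf v p + a * delta_vf v p)^2 \<le> (gamma_vf v p)^2 + (delta_vf v p)^2"
  proof -
    have "(b * gamma_vf v p + a * delta_vf v p)^2 \<le> (a^2+b^2) * ((gamma_vf v p)^2 + (delta_vf v p)^2)"
    proof -
      have "0 \<le> (b * delta_vf v p - a * gamma_vf v p)^2" by simp
      then show ?thesis by (simp add: power2_eq_square algebra_simps)
    qed
    then show ?thesis using ab1 by simp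
  qed
  have s0: "sin th > 0" using th sin_gt_zero by blast
  have "Dv v p (sin th *\<^sub>R E2 ph) \<bullet> vperp v p = sin th * (L (E2 ph) \<bullet> u)"
    unfolding Dv_def L_def[symmetric] u_def[symmetric] using lin by (simp add: linear_scale)
  then have "(sin th)^2 + (Dv v p (sin th *\<^sub>R E2 ph) \<bullet> vperp v p)^2
      \<le> ((sin th)^2) * (1 + (gamma_vf v p)^2 + (delta_vf v p)^2)"
  proof -
    have "(sin th * (L (E2 ph) \<bullet> u))^2 = (sin th)^2 * (L (E2 ph) \<bullet> u)^2"
      by (simp add: power_mult_distrib)
    also have "\<dots> \<le> (sin th)^2 * ((gamma_vf v p)^2 + (delta_vf v p)^2)"
      using cs LE2 by (intro mult_left_mono) auto
    finally show ?thesis using \<open>Dv v p (sin th *\<^sub>R E2 ph) \<bullet> vperp v p = sin th * (L (E2 ph) \<bullet> u)\<close>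
      by (simp add: algebra_simps)
  qed
  then have "sqrt ((sin th)^2 + (Dv v p (sin th *\<^sub>R E2 ph) \<bullet> vperp v p)^2)
      \<le> sqrt (((sin th)^2) * (1 + (gamma_vf v p)^2 + (delta_vf v p)^2))"
    using real_sqrt_le_mono by blast
  also have "\<dots> = sin th * sqrt (1 + (gamma_vf v p)^2 + (delta_vf v p)^2)"
    using s0 by (simp add: real_sqrt_mult)
  finally show ?thesis by (simp add: mult.commute)
qed


lemma winding_C1:
  fixes g g' :: "real \<Rightarrow> complex"
  assumes der: "\<And>t. (g has_vector_derivative g' t) (at t)"
    and cont: "continuous_on {0..1} g'"
    and nz: "\<And>t. t \<in> {0..1} \<Longrightarrow> g t \<noteq> 0"
  shows "winding_number g 0 = integral {0..1} (\<lambda>t. g' t / g t) / (2*pi*\<i>)"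
proof -
  have C1: "g C1_differentiable_on {0..1}"
    unfolding C1_differentiable_on_def using der cont by blast
  then have vp: "valid_path g"
    unfolding valid_path_def by (rule C1_differentiable_imp_piecewise)
  have ni: "0 \<notin> path_image g" using nz by (auto simp: path_image_def)
  have "winding_number g 0 = 1/(2*pi*\<i>) * contour_integral g (\<lambda>w. 1/(w - 0))"
    by (rule winding_number_valid_path[OF vp ni])
  also have "contour_integral g (\<lambda>w. 1/(w - 0)) = integral {0..1} (\<lambda>t. g' t / g t)"
    unfolding contour_integral_integral
  proof (rule integral_cong)
    fix t :: real assume "t \<in> {0..1}"
    show "1 / (g t - 0) * vector_derivative g (at t) = g' t / g t"
      using vector_derivative_at[OF der[of t]] by simp
  qed
  finally show ?thesis by simp
qed


lemma vec3_eq: "(vector [a,b,c] :: real^3) = a *\<^sub>R axis 1 1 + b *\<^sub>R axis 2 1 + c *\<^sub>R axis 3 1"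
  unfolding vec_eq_iff forall_3 by (simp add: axis_def)

lemma sph_dph: "((\<lambda>ph. sph (th,ph)) has_vector_derivative (sin th *\<^sub>R E2 ph)) (at ph)"
proof -
  have "((\<lambda>ph. (sin th * cos ph) *\<^sub>R axis 1 1 + (sin th * sin ph) *\<^sub>R axis 2 1 + cos th *\<^sub>R (axis 3 1 :: real^3))
     has_vector_derivative (sin th *\<^sub>R E2 ph)) (at ph)"
    by (auto intro!: derivative_eq_intros simp: E2_def vec3_eq algebra_simps)
  then show ?thesis by (simp add: sph_def vec3_eq)
qed

lemma E1_dph: "((\<lambda>ph. E1 th ph) has_vector_derivative (cos th *\<^sub>R E2 ph)) (at ph)"
proof -
  have "((\<lambda>ph. (cos th * cos ph) *\<^sub>R axis 1 1 + (cos th * sin ph) *\<^sub>R axis 2 1 + (- sin th) *\<^sub>R (axis 3 1 :: real^3))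
     has_vector_derivative (cos th *\<^sub>R E2 ph)) (at ph)"
    by (auto intro!: derivative_eq_intros simp: E2_def vec3_eq algebra_simps)
  then show ?thesis by (simp add: E1_def vec3_eq)
qed

lemma E2_dph: "((\<lambda>ph. E2 ph) has_vector_derivative (- (sin th *\<^sub>R sph (th,ph) + cos th *\<^sub>R E1 th ph))) (at ph)"
proof -
  have e: "sin th *\<^sub>R sph (th,ph) + cos th *\<^sub>R E1 th ph = vector [cos ph, sin ph, 0]"
  proof -
    have a: "sin th ^ 2 + cos th ^ 2 = 1" by simp
    show ?thesis unfolding vec_eq_iff forall_3 sph_def E1_def using a by (simp; intro conjI; algebra)
  qed
  have "((\<lambda>ph. (- sin ph) *\<^sub>R axis 1 1 + (cos ph) *\<^sub>R axis 2 1 + 0 *\<^sub>R (axis 3 1 :: real^3))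
     has_vector_derivative (- vector [cos ph, sin ph, 0])) (at ph)"
    by (auto intro!: derivative_eq_intros simp: vec3_eq algebra_simps)
  then show ?thesis by (simp add: E2_def vec3_eq e)
qed

lemma sph_Mset: assumes "0 < th" "th < pi" shows "sph (th,ph) \<in> Mset"
proof -
  have s: "sin th > 0" using assms sin_gt_zero by blast
  have "sph (th,ph) \<noteq> northP \<and> sph (th,ph) \<noteq> southP"
  proof (rule ccontr)
    assume "\<not> ?thesis"
    then have "sin th * cos ph = 0" "sin th * sin ph = 0"
      by (auto simp: northP_def southP_def sph_def vec_eq_iff forall_3)
    then have "cos ph = 0" "sin ph = 0" using s by auto
    then show False using sin_cos_squared_add[of ph] by simp
  qed
  then show ?thesis using norm_sph[of "(th,ph)"] by (auto simp: Mset_def sphere2_def)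
qed

lemma linear_rep:
  assumes "linear f" shows "f h = (\<Sum>i\<in>Basis. (h \<bullet> i) *\<^sub>R f i)"
proof -
  have "f h = f (\<Sum>i\<in>Basis. (h \<bullet> i) *\<^sub>R i)" by (simp add: euclidean_representation)
  also have "\<dots> = (\<Sum>i\<in>Basis. (h \<bullet> i) *\<^sub>R f i)"
    using assms by (simp add: linear_sum linear_scale)
  finally show ?thesis .
qed

locale vfctx =
  fixes v :: "real^3 \<Rightarrow> real^3" and U :: "(real^3) set"
  assumes U_open: "open U" and MU: "Mset \<subseteq> U"
    and dU: "\<And>x. x \<in> U \<Longrightarrow> v differentiable (at x)"
    and pc: "\<And>i. i \<in> Basis \<Longrightarrow> continuous_on U (\<lambda>x. frechet_derivative v (at x) i)"
    and unit: "\<And>p. p \<in> Mset \<Longrightarrow> norm (v p) = 1 \<and> v p \<bullet> p = 0"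
begin

lemma v_cont: "continuous_on U v"
  using dU differentiable_imp_continuous_within continuous_at_imp_continuous_on by blast

lemma fd_cont:
  assumes "continuous_on S p" "p ` S \<subseteq> U" "continuous_on S w"
  shows "continuous_on S (\<lambda>s. Dv v (p s) (w s))"
proof -
  have eq: "Dv v (p s) (w s) = (\<Sum>i\<in>Basis. (w s \<bullet> i) *\<^sub>R frechet_derivative v (at (p s)) i)"
    if "s \<in> S" for s
    unfolding Dv_def using that assms(2) dU linear_frechet_derivative linear_rep by blast
  have "continuous_on S (\<lambda>s. (\<Sum>i\<in>Basis. (w s \<bullet> i) *\<^sub>R frechet_derivative v (at (p s)) i))"
  proof (rule continuous_on_sum)
    fix i :: "real^3" assume i: "i \<in> Basis"
    have c1: "continuous_on S (\<lambda>s. frechet_derivative v (at (p s)) i)"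
      using continuous_on_compose2[OF pc[OF i] assms(1) assms(2)] .
    have c2: "continuous_on S (\<lambda>s. w s \<bullet> i)"
      using assms(3) by (intro continuous_on_inner continuous_on_const)
    show "continuous_on S (\<lambda>s. (w s \<bullet> i) *\<^sub>R frechet_derivative v (at (p s)) i)"
      using continuous_on_scaleR[OF c2 c1] .
  qed
  then show ?thesis by (rule continuous_on_eq) (use eq in auto)
qed

definition A :: "real \<Rightarrow> real \<Rightarrow> real" where "A th ph = v (sph (th,ph)) \<bullet> E1 th ph"
definition B :: "real \<Rightarrow> real \<Rightarrow> real" where "B th ph = v (sph (th,ph)) \<bullet> E2 ph"
definition Vd :: "real \<Rightarrow> real \<Rightarrow> real^3" where "Vd th ph = Dv v (sph (th,ph)) (sin th *\<^sub>R E2 ph)"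
definition gfun :: "real \<Rightarrow> real \<Rightarrow> real" where
  "gfun th ph = - (Vd th ph \<bullet> vperp v (sph (th,ph)))"

context fixes th :: real assumes th: "0 < th" "th < pi"
begin

lemma inU: "sph (th,ph) \<in> U" using sph_Mset[OF th] MU by blast

lemma V_dph: "((\<lambda>ph. v (sph (th,ph))) has_vector_derivative Vd th ph) (at ph)"
proof -
  have d: "(v has_derivative frechet_derivative v (at (sph (th,ph)))) (at (sph (th,ph)))"
    using dU[OF inU] frechet_derivative_works by blast
  have lin: "linear (frechet_derivative v (at (sph (th,ph))))"
    using dU[OF inU] linear_frechet_derivative by blast
  have "((\<lambda>ph. v (sph (th,ph))) has_derivative
      (frechet_derivative v (at (sph (th,ph))) \<circ> (\<lambda>x. x *\<^sub>R (sin th *\<^sub>R E2 ph)))) (at ph)"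
    using diff_chain_at[OF sph_dph[unfolded has_vector_derivative_def] d] by (simp add: o_def)
  then show ?thesis unfolding has_vector_derivative_def Vd_def Dv_def
    using lin by (simp add: o_def linear_scale)
qed

lemma vexp: "v (sph (th,ph)) = A th ph *\<^sub>R E1 th ph + B th ph *\<^sub>R E2 ph"
  using frame_expand[of "v (sph (th,ph))" th ph] unit[OF sph_Mset[OF th]] by (simp add: A_def B_def)

lemma AB1: "(A th ph)^2 + (B th ph)^2 = 1"
proof -
  have "v (sph (th,ph)) \<bullet> v (sph (th,ph)) = 1" using unit[OF sph_Mset[OF th]] by (simp add: dot_square_norm)
  then show ?thesis unfolding vexp
    by (simp add: inner_add_left inner_add_right frame_inner frame_inner2 power2_eq_square)
qed

lemma A_dph: "((\<lambda>ph. A th ph) has_real_derivative (Vd th ph \<bullet> E1 th ph + cos th * B th ph)) (at ph)"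
proof -
  have "((\<lambda>ph. v (sph (th,ph)) \<bullet> E1 th ph) has_vector_derivative
      (v (sph (th,ph)) \<bullet> (cos th *\<^sub>R E2 ph) + Vd th ph \<bullet> E1 th ph)) (at ph)"
    by (rule bounded_bilinear.has_vector_derivative[OF bounded_bilinear_inner V_dph E1_dph])
  then show ?thesis unfolding has_real_derivative_iff_has_vector_derivative A_def[abs_def] B_def
    by (simp add: algebra_simps)
qed

lemma B_dph: "((\<lambda>ph. B th ph) has_real_derivative (Vd th ph \<bullet> E2 ph - cos th * A th ph)) (at ph)"
proof -
  have "((\<lambda>ph. v (sph (th,ph)) \<bullet> E2 ph) has_vector_derivative
      (v (sph (th,ph)) \<bullet> (- (sin th *\<^sub>R sph (th,ph) + cos th *\<^sub>R E1 th ph)) + Vd th ph \<bullet> E2 ph)) (at ph)"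
    by (rule bounded_bilinear.has_vector_derivative[OF bounded_bilinear_inner V_dph E2_dph])
  moreover have "v (sph (th,ph)) \<bullet> sph (th,ph) = 0" using unit[OF sph_Mset[OF th]] by simp
  ultimately show ?thesis unfolding has_real_derivative_iff_has_vector_derivative A_def[abs_def] B_def[abs_def]
    by (simp add: algebra_simps inner_add_right)
qed

lemma gfun_eq: "gfun th ph = A th ph * (Vd th ph \<bullet> E2 ph - cos th * A th ph)
     - B th ph * (Vd th ph \<bullet> E1 th ph + cos th * B th ph) + cos th"
proof -
  have u: "vperp v (sph (th,ph)) = B th ph *\<^sub>R E1 th ph - A th ph *\<^sub>R E2 ph"
    unfolding vperp_def by (subst vexp) (rule cross_frame)
  have c: "cos th * (A th ph * A th ph) + cos th * (B th ph * B th ph) = cos th"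
    using AB1[of ph] by (simp add: power2_eq_square flip: distrib_left)
  show ?thesis using c unfolding gfun_def u
    by (simp add: inner_diff_right algebra_simps power2_eq_square)
qed

end
end


lemma sph_cont: "continuous_on (X::(real\<times>real) set) sph"
proof -
  have "continuous_on X (\<lambda>x. (sin (fst x) * cos (snd x)) *\<^sub>R axis 1 1 + (sin (fst x) * sin (snd x)) *\<^sub>R axis 2 1
      + cos (fst x) *\<^sub>R (axis 3 1 :: real^3))"
    by (intro continuous_intros)
  then show ?thesis unfolding sph_def vec3_eq .
qed

lemma E1_cont: "continuous_on (X::(real\<times>real) set) (\<lambda>x. E1 (fst x) (snd x))"
proof -
  have "continuous_on X (\<lambda>x. (cos (fst x) * cos (snd x)) *\<^sub>R axis 1 1 + (cos (fst x) * sin (snd x)) *\<^sub>R axis 2 1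
      + (- sin (fst x)) *\<^sub>R (axis 3 1 :: real^3))"
    by (intro continuous_intros)
  then show ?thesis unfolding E1_def vec3_eq .
qed

lemma E2_cont: "continuous_on (X::(real\<times>real) set) (\<lambda>x. E2 (snd x))"
proof -
  have "continuous_on X (\<lambda>x. (- sin (snd x)) *\<^sub>R axis 1 1 + (cos (snd x)) *\<^sub>R axis 2 1
      + 0 *\<^sub>R (axis 3 1 :: real^3))"
    by (intro continuous_intros)
  then show ?thesis unfolding E2_def vec3_eq .
qed

lemma Complex_eq2: "Complex a b = a *\<^sub>R 1 + b *\<^sub>R \<i>"
  by (simp add: complex_eq_iff)

definition S0 :: "(real \<times> real) set" where "S0 = {0<..<pi} \<times> UNIV"

lemma sph_S0: "x \<in> S0 \<Longrightarrow> sph x \<in> Mset"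
  using sph_Mset[of "fst x" "snd x"] by (auto simp: S0_def)

context vfctx begin

lemma vsph_cont: "continuous_on S0 (\<lambda>x. v (sph x))"
  using continuous_on_compose2[OF v_cont sph_cont, of S0] sph_S0 MU by blast

lemma A_cont: "continuous_on S0 (\<lambda>x. A (fst x) (snd x))"
  unfolding A_def prod.collapse by (intro continuous_on_inner vsph_cont E1_cont)

lemma B_cont: "continuous_on S0 (\<lambda>x. B (fst x) (snd x))"
  unfolding B_def prod.collapse by (intro continuous_on_inner vsph_cont E2_cont)

lemma Vd_cont: "continuous_on S0 (\<lambda>x. Vd (fst x) (snd x))"
proof -
  have "continuous_on S0 (\<lambda>x. Dv v (sph x) (sin (fst x) *\<^sub>R E2 (snd x)))"
    by (rule fd_cont) (use sph_S0 MU in \<open>auto intro!: continuous_intros sph_cont E2_cont\<close>)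
  then show ?thesis unfolding Vd_def by simp
qed

lemma gfun_cont: "continuous_on S0 (\<lambda>x. gfun (fst x) (snd x))"
proof -
  have "continuous_on S0 (\<lambda>x. - (Vd (fst x) (snd x) \<bullet> cross3 (v (sph x)) (sph x)))"
    by (intro continuous_intros continuous_on_cross Vd_cont vsph_cont sph_cont)
  then show ?thesis unfolding gfun_def vperp_def by simp
qed

definition Ad :: "real \<Rightarrow> real \<Rightarrow> real" where "Ad th ph = Vd th ph \<bullet> E1 th ph + cos th * B th ph"
definition Bd :: "real \<Rightarrow> real \<Rightarrow> real" where "Bd th ph = Vd th ph \<bullet> E2 ph - cos th * A th ph"

lemma Ad_cont: "continuous_on S0 (\<lambda>x. Ad (fst x) (snd x))"
  unfolding Ad_def by (intro continuous_intros continuous_on_inner Vd_cont E1_cont B_cont)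
lemma Bd_cont: "continuous_on S0 (\<lambda>x. Bd (fst x) (snd x))"
  unfolding Bd_def by (intro continuous_intros continuous_on_inner Vd_cont E2_cont A_cont)

lemma cont_line:
  assumes "continuous_on S0 (\<lambda>x. f (fst x) (snd x))" "0 < th" "th < pi"
  shows "continuous_on X (\<lambda>t. f th (2*pi*t))"
proof -
  have c: "continuous_on X (\<lambda>t. (th, 2*pi*t))" by (intro continuous_intros)
  have sub: "(\<lambda>t. (th, 2*pi*t)) ` X \<subseteq> S0" using assms(2,3) by (auto simp: S0_def)
  from continuous_on_compose2[OF assms(1) c sub] show ?thesis by simp
qed

definition W :: "real \<Rightarrow> real \<Rightarrow> complex" where "W th t = Complex (A th (2*pi*t)) (B th (2*pi*t))"
definition Wd :: "real \<Rightarrow> real \<Rightarrow> complex" where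
  "Wd th t = Complex (2*pi * Ad th (2*pi*t)) (2*pi * Bd th (2*pi*t))"

context fixes th :: real assumes th: "0 < th" "th < pi"
begin

lemma W_der: "(W th has_vector_derivative Wd th t) (at t)"
proof -
  have l: "((\<lambda>t. 2*pi*t) has_real_derivative (2*pi)) (at t)"
    by (auto intro!: derivative_eq_intros)
  have a0: "((\<lambda>ph. A th ph) has_real_derivative Ad th ph) (at ph)" for ph
    using A_dph[OF th] by (simp add: Ad_def)
  have b0: "((\<lambda>ph. B th ph) has_real_derivative Bd th ph) (at ph)" for ph
    using B_dph[OF th] by (simp add: Bd_def)
  have a: "((\<lambda>t. A th (2*pi*t)) has_real_derivative (Ad th (2*pi*t) * (2*pi))) (at t)"
    by (rule DERIV_chain2[OF a0 l])
  have b: "((\<lambda>t. B th (2*pi*t)) has_real_derivative (Bd th (2*pi*t) * (2*pi))) (at t)"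
    by (rule DERIV_chain2[OF b0 l])
  have "((\<lambda>t. A th (2*pi*t) *\<^sub>R 1 + B th (2*pi*t) *\<^sub>R \<i>) has_vector_derivative
     ((Ad th (2*pi*t) * (2*pi)) *\<^sub>R 1 + (Bd th (2*pi*t) * (2*pi)) *\<^sub>R \<i>)) (at t)"
    using has_vector_derivative_add[OF has_vector_derivative_scaleR[OF a has_vector_derivative_const]
       has_vector_derivative_scaleR[OF b has_vector_derivative_const]] by simp
  then show ?thesis unfolding W_def[abs_def] Wd_def Complex_eq2 by (simp add: algebra_simps)
qed

lemma Wd_cont: "continuous_on X (Wd th)"
proof -
  have "continuous_on X (\<lambda>t. (2*pi * Ad th (2*pi*t)) *\<^sub>R 1 + (2*pi * Bd th (2*pi*t)) *\<^sub>R \<i>)"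
    by (intro continuous_intros cont_line[OF Ad_cont th] cont_line[OF Bd_cont th])
  then show ?thesis unfolding Wd_def[abs_def] Complex_eq2 .
qed

lemma W_cont: "continuous_on X (W th)"
proof -
  have "continuous_on X (\<lambda>t. (A th (2*pi*t)) *\<^sub>R 1 + (B th (2*pi*t)) *\<^sub>R \<i>)"
    by (intro continuous_intros cont_line[OF A_cont th] cont_line[OF B_cont th])
  then show ?thesis unfolding W_def[abs_def] Complex_eq2 .
qed

lemma W_norm: "cmod (W th t) = 1"
  using AB1[OF th, of "2*pi*t"] by (simp add: W_def cmod_def)

lemma W_loop: "W th 1 = W th 0"
  by (simp add: W_def A_def B_def sph_def E1_def E2_def)

lemma W_nz: "W th t \<noteq> 0"
  using W_norm[of t] by auto

lemma W_path: "path (W th)" "pathfinish (W th) = pathstart (W th)" "0 \<notin> path_image (W th)"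
  using W_cont W_loop W_nz
  by (auto simp: path_def pathfinish_def pathstart_def path_image_def)

lemma wind_W: "winding_number (W th) 0 = integral {0..1} (\<lambda>t. Wd th t / W th t) / (2*pi*\<i>)"
  by (rule winding_C1[OF W_der Wd_cont]) (use W_nz in auto)

lemma Im_WdW: "Im (Wd th t / W th t) = 2*pi * (A th (2*pi*t) * Bd th (2*pi*t) - B th (2*pi*t) * Ad th (2*pi*t))"
proof -
  have "Wd th t / W th t = Wd th t * cnj (W th t)"
    using W_norm[of t] by (simp add: divide_conv_cnj)
  then show ?thesis by (simp add: W_def Wd_def algebra_simps)
qed

end

lemma W_homotopic:
  assumes "0 < th1" "th1 < pi" "0 < th2" "th2 < pi"
  shows "winding_number (W th1) 0 = winding_number (W th2) 0"
proof (rule winding_number_homotopic_loops)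
  define h where "h = (\<lambda>x::real\<times>real. W ((1 - fst x) * th1 + fst x * th2) (snd x))"
  have inS: "((1 - fst x) * th1 + fst x * th2, 2*pi*(snd x)) \<in> S0" if "x \<in> {0..1}\<times>{0..1}" for x
  proof -
    have s: "0 \<le> fst x" "fst x \<le> 1" using that by auto
    have "0 < (1 - fst x) * th1 + fst x * th2"
    proof (cases "fst x = 0")
      case True then show ?thesis using assms by simp
    next
      case False then have "fst x > 0" using s by simp
      then show ?thesis using assms s by (smt (verit) mult_nonneg_nonneg mult_pos_pos)
    qed
    moreover have "(1 - fst x) * th1 + fst x * th2 < pi"
    proof -
      have "(1 - fst x) * th1 \<le> (1 - fst x) * pi" "fst x * th2 \<le> fst x * pi"
        using s assms by (auto intro!: mult_left_mono)
      moreover have "(1 - fst x) * th1 < (1 - fst x) * pi \<or> fst x * th2 < fst x * pi"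
        using s assms by (cases "fst x = 1") auto
      ultimately show ?thesis by (auto simp: algebra_simps)
    qed
    ultimately show ?thesis by (simp add: S0_def)
  qed
  have c1: "continuous_on ({0..1}\<times>{0..1}) (\<lambda>x::real\<times>real. ((1 - fst x) * th1 + fst x * th2, 2*pi*(snd x)))"
    by (intro continuous_intros)
  have cA: "continuous_on ({0..1}\<times>{0..1}) (\<lambda>x::real\<times>real. A ((1 - fst x) * th1 + fst x * th2) (2*pi*(snd x)))"
    using continuous_on_compose2[OF A_cont c1] inS by auto
  have cB: "continuous_on ({0..1}\<times>{0..1}) (\<lambda>x::real\<times>real. B ((1 - fst x) * th1 + fst x * th2) (2*pi*(snd x)))"
    using continuous_on_compose2[OF B_cont c1] inS by auto
  have ch: "continuous_on ({0..1}\<times>{0..1}) h"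
  proof -
    have "continuous_on ({0..1}\<times>{0..1}) (\<lambda>x::real\<times>real. A ((1 - fst x) * th1 + fst x * th2) (2*pi*(snd x)) *\<^sub>R 1
       + B ((1 - fst x) * th1 + fst x * th2) (2*pi*(snd x)) *\<^sub>R \<i>)"
      by (intro continuous_intros cA cB)
    then show ?thesis unfolding h_def W_def Complex_eq2 .
  qed
  have nz: "h x \<noteq> 0" if "x \<in> {0..1}\<times>{0..1}" for x
  proof -
    have "((1 - fst x) * th1 + fst x * th2) \<in> {0<..<pi}" using inS[OF that] by (simp add: S0_def)
    then show ?thesis using W_norm[of "(1 - fst x) * th1 + fst x * th2" "snd x"] by (auto simp: h_def)
  qed
  have lp: "pathfinish (h \<circ> Pair t) = pathstart (h \<circ> Pair t)" for t
    by (simp add: h_def pathfinish_def pathstart_def W_def A_def B_def sph_def E1_def E2_def)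
  show "homotopic_loops (- {0}) (W th1) (W th2)"
    unfolding homotopic_loops
    by (rule exI[of _ h]) (use ch nz lp in \<open>auto simp: h_def\<close>)
qed

end


definition ee :: "real \<Rightarrow> complex" where "ee t = exp (of_real t * (2*pi*\<i>))"

lemma ee_der: "(ee has_vector_derivative (2*pi*\<i>) * ee t) (at t)"
proof -
  have "((\<lambda>z. exp (z * (2*pi*\<i>))) has_field_derivative (exp (of_real t * (2*pi*\<i>)) * (2*pi*\<i>))) (at (of_real t))"
    by (auto intro!: derivative_eq_intros)
  from has_vector_derivative_real_field[OF this] show ?thesis
    unfolding ee_def[abs_def] by (simp add: mult.commute)
qed

lemma ee_nz: "ee t \<noteq> 0" by (simp add: ee_def)

lemma ee_loop: "ee 1 = ee 0"
  by (simp add: ee_def exp_eq_1)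

lemma wind_mult_exp:
  fixes Y Y' :: "real \<Rightarrow> complex"
  assumes der: "\<And>t. (Y has_vector_derivative Y' t) (at t)"
    and cont: "continuous_on {0..1} Y'"
    and nz: "\<And>t. t \<in> {0..1} \<Longrightarrow> Y t \<noteq> 0"
  shows "winding_number (\<lambda>t. ee t * Y t) 0 = 1 + integral {0..1} (\<lambda>t. Y' t / Y t) / (2*pi*\<i>)"
proof -
  have dY: "continuous_on {0..1} Y"
    using der by (meson continuous_at_imp_continuous_on has_vector_derivative_continuous)
  have dE: "continuous_on {0..1} ee"
    using ee_der by (meson continuous_at_imp_continuous_on has_vector_derivative_continuous)
  have d: "((\<lambda>t. ee t * Y t) has_vector_derivative (ee t * Y' t + (2*pi*\<i>) * ee t * Y t)) (at t)" for t
    using has_vector_derivative_mult[OF ee_der der] by (simp add: algebra_simps)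
  have c: "continuous_on {0..1} (\<lambda>t. ee t * Y' t + (2*pi*\<i>) * ee t * Y t)"
    by (intro continuous_intros dE dY cont)
  have "winding_number (\<lambda>t. ee t * Y t) 0 =
      integral {0..1} (\<lambda>t. (ee t * Y' t + (2*pi*\<i>) * ee t * Y t) / (ee t * Y t)) / (2*pi*\<i>)"
    by (rule winding_C1[OF d c]) (use nz ee_nz in auto)
  also have "integral {0..1} (\<lambda>t. (ee t * Y' t + (2*pi*\<i>) * ee t * Y t) / (ee t * Y t))
     = integral {0..1} (\<lambda>t. (2*pi*\<i>) + Y' t / Y t)"
    by (rule integral_cong) (use nz ee_nz in \<open>auto simp: field_simps\<close>)
  also have "\<dots> = (2*pi*\<i>) + integral {0..1} (\<lambda>t. Y' t / Y t)"
  proof -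
    have "(\<lambda>t. Y' t / Y t) integrable_on {0..1}"
      by (rule integrable_continuous_interval) (use nz in \<open>auto intro!: continuous_intros cont dY\<close>)
    note int = this
    show ?thesis
      using Henstock_Kurzweil_Integration.integral_add[OF integrable_const_ivl[of "complex_of_real (2*pi) * \<i>" 0 1] int] by simp
  qed
  finally show ?thesis by (simp add: add_divide_distrib)
qed

context vfctx begin

definition Zc :: "real \<Rightarrow> real \<Rightarrow> complex" where
  "Zc th t = Complex (v (sph (th, 2*pi*t)) $ 1) (v (sph (th, 2*pi*t)) $ 2)"

lemma Zc_eq:
  assumes th: "0 < th" "th < pi"
  shows "Zc th t = ee t * Complex (cos th * A th (2*pi*t)) (B th (2*pi*t))"
proof -
  have e: "ee t = Complex (cos (2*pi*t)) (sin (2*pi*t))"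
    unfolding ee_def by (simp add: exp_eq_polar complex_eq_iff cis.sel mult.commute)
  show ?thesis
    unfolding Zc_def e
    by (subst (1 2) vexp[OF th]) (simp add: E1_def E2_def complex_eq_iff algebra_simps)
qed

lemma cont_Zhom:
  assumes th: "0 < th" "th < pi"
  shows "continuous_on X (\<lambda>x. ee (snd x) * Complex ((((1 - fst x) * cos th) + fst x * sg) * A th (2*pi*(snd x))) (B th (2*pi*(snd x))))"
proof -
  have cA: "continuous_on X (\<lambda>x. A th (2*pi*(snd x)))"
    using continuous_on_compose2[OF cont_line[OF A_cont th, of UNIV] continuous_on_snd[OF continuous_on_id], of X] by simp
  have cB: "continuous_on X (\<lambda>x. B th (2*pi*(snd x)))"
    using continuous_on_compose2[OF cont_line[OF B_cont th, of UNIV] continuous_on_snd[OF continuous_on_id], of X] by simp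
  have cE: "continuous_on X (\<lambda>x. ee (snd x))"
    unfolding ee_def by (intro continuous_intros)
  show ?thesis unfolding Complex_eq2
    by (intro continuous_intros cA cB cE)
qed

lemma Zc_homotopic:
  assumes th: "0 < th" "th < pi" and sg: "sg = 1 \<or> sg = -1" and sgn: "sg * cos th > 0"
  shows "winding_number (Zc th) 0 = winding_number (\<lambda>t. ee t * Complex (sg * A th (2*pi*t)) (B th (2*pi*t))) 0"
proof (rule winding_number_homotopic_loops)
  define h where "h = (\<lambda>x. ee (snd x) * Complex ((((1 - fst x) * cos th) + fst x * sg) * A th (2*pi*(snd x))) (B th (2*pi*(snd x))))"
  have ch: "continuous_on ({0..1}\<times>{0..1}) h" unfolding h_def by (rule cont_Zhom[OF th])
  have nz: "h x \<noteq> 0" if "x \<in> {0..1}\<times>{0..1}" for x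
  proof
    assume "h x = 0"
    then have "Complex (((1 - fst x) * cos th + fst x * sg) * A th (2*pi*(snd x))) (B th (2*pi*(snd x))) = 0"
      by (simp add: h_def ee_nz)
    then have z: "((1 - fst x) * cos th + fst x * sg) * A th (2*pi*(snd x)) = 0" "B th (2*pi*(snd x)) = 0"
      by (simp_all add: complex_eq_iff)
    have "sg * ((1 - fst x) * cos th + fst x * sg) = (1 - fst x) * (sg * cos th) + fst x * (sg * sg)"
      by (simp add: algebra_simps)
    also have "\<dots> > 0"
    proof -
      have "sg * sg = 1" using sg by auto
      then show ?thesis using that sgn
        by (cases "fst x = 1") (auto intro!: add_pos_nonneg mult_pos_pos)
    qed
    finally have "(1 - fst x) * cos th + fst x * sg \<noteq> 0" by auto
    then have "A th (2*pi*(snd x)) = 0" using z by simp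
    then show False using AB1[OF th, of "2*pi*(snd x)"] z by simp
  qed
  have lp: "pathfinish (h \<circ> Pair t) = pathstart (h \<circ> Pair t)" for t
    using ee_loop by (simp add: h_def pathfinish_def pathstart_def A_def B_def sph_def E1_def E2_def)
  have h0: "h (0, t) = Zc th t" for t using Zc_eq[OF th, of t] by (simp add: h_def)
  show "homotopic_loops (- {0}) (Zc th) (\<lambda>t. ee t * Complex (sg * A th (2*pi*t)) (B th (2*pi*t)))"
    unfolding homotopic_loops
    by (rule exI[of _ h]) (use ch nz lp h0 in \<open>auto simp: h_def\<close>)
qed

end


lemma the_index:
  fixes f :: "real \<Rightarrow> complex"
  assumes "\<And>r. 0 < r \<Longrightarrow> r < 1 \<Longrightarrow> f r = of_int w0"
  shows "(THE w::int. \<exists>e>0. \<forall>r. 0 < r \<and> r < e \<longrightarrow> f r = of_int w) = w0"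
proof (rule the_equality)
  show "\<exists>e>0. \<forall>r. 0 < r \<and> r < e \<longrightarrow> f r = of_int w0"
    using assms by (intro exI[of _ 1]) auto
next
  fix w assume "\<exists>e>0. \<forall>r. 0 < r \<and> r < e \<longrightarrow> f r = of_int w"
  then obtain e where e: "e > 0" "\<And>r. 0 < r \<Longrightarrow> r < e \<Longrightarrow> f r = of_int w" by blast
  define r where "r = min e 1 / 2"
  have r: "0 < r" "r < e" "r < 1" using e by (auto simp: r_def)
  have "(of_int w :: complex) = of_int w0" using e(2)[OF r(1,2)] assms[OF r(1,3)] by simp
  then show "w = w0" by simp
qed

lemma northP3: "northP $ 3 = 1" by (simp add: northP_def)
lemma southP3: "southP $ 3 = -1" by (simp add: southP_def)

lemma arcsin_r: assumes "0 < r" "r < 1"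
  shows "0 < arcsin r" "arcsin r < pi/2" "sin (arcsin r) = r" "cos (arcsin r) = sqrt (1 - r^2)"
proof -
  show "0 < arcsin r" using arcsin_less_mono[of 0 r] assms by simp
  show "arcsin r < pi/2" using arcsin_lt_bounded[of r] assms by simp
  show "sin (arcsin r) = r" using assms by simp
  show "cos (arcsin r) = sqrt (1 - r^2)" using cos_arcsin[of r] assms by simp
qed

lemma pole_loop_N: assumes "0 < r" "r < 1"
  shows "pole_loop (northP $ 3) r t = sph (arcsin r, 2*pi*t)"
  using arcsin_r[OF assms] by (simp add: pole_loop_def sph_def northP3)

lemma pole_loop_S: assumes "0 < r" "r < 1"
  shows "pole_loop (southP $ 3) r t = sph (pi - arcsin r, 2*pi*t)"
  using arcsin_r[OF assms] by (simp add: pole_loop_def sph_def southP3)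

context vfctx begin

definition mW :: complex where "mW = winding_number (W (pi/2)) 0"

lemma mW_int: "mW \<in> \<int>"
  unfolding mW_def using W_path[of "pi/2"] by (intro integer_winding_number) auto

lemma wind_W_all: "0 < th \<Longrightarrow> th < pi \<Longrightarrow> winding_number (W th) 0 = mW"
  unfolding mW_def by (rule W_homotopic) auto

lemma int_WdW: assumes "0 < th" "th < pi"
  shows "integral {0..1} (\<lambda>t. Wd th t / W th t) = 2*pi*\<i> * mW"
  using wind_W[OF assms] wind_W_all[OF assms] by (simp add: field_simps)

lemma Zc_north: assumes "0 < th" "th < pi/2"
  shows "winding_number (Zc th) 0 = 1 + mW"
proof -
  have th: "0 < th" "th < pi" using assms by auto
  have c: "1 * cos th > 0" using assms by (simp add: cos_gt_zero)
  have "winding_number (Zc th) 0 = winding_number (\<lambda>t. ee t * Complex (1 * A th (2*pi*t)) (B th (2*pi*t))) 0"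
    by (rule Zc_homotopic[OF th _ c]) simp
  also have "(\<lambda>t. ee t * Complex (1 * A th (2*pi*t)) (B th (2*pi*t))) = (\<lambda>t. ee t * W th t)"
    by (simp add: W_def)
  also have "winding_number (\<lambda>t. ee t * W th t) 0 = 1 + integral {0..1} (\<lambda>t. Wd th t / W th t) / (2*pi*\<i>)"
    by (rule wind_mult_exp[OF W_der[OF th] Wd_cont[OF th]]) (use W_nz[OF th] in auto)
  finally show ?thesis using int_WdW[OF th] by simp
qed

lemma Zc_south: assumes "pi/2 < th" "th < pi"
  shows "winding_number (Zc th) 0 = 1 - mW"
proof -
  have th: "0 < th" "th < pi" using assms by (auto intro: less_trans[of 0 "pi/2"])
  have "th < 3*pi/2" using assms(2) pi_gt_zero by linarith
  then have c: "-1 * cos th > 0" using cos_lt_zero_pi[OF assms(1)] by simp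
  have "winding_number (Zc th) 0 = winding_number (\<lambda>t. ee t * Complex (-1 * A th (2*pi*t)) (B th (2*pi*t))) 0"
    by (rule Zc_homotopic[OF th _ c]) simp
  also have "(\<lambda>t. ee t * Complex (-1 * A th (2*pi*t)) (B th (2*pi*t))) = (\<lambda>t. ee t * - cnj (W th t))"
  proof
    fix t
    have "Complex (-1 * A th (2*pi*t)) (B th (2*pi*t)) = - cnj (W th t)"
      by (simp add: W_def complex_eq_iff)
    then show "ee t * Complex (-1 * A th (2*pi*t)) (B th (2*pi*t)) = ee t * - cnj (W th t)" by simp
  qed
  also have "winding_number (\<lambda>t. ee t * - cnj (W th t)) 0
     = 1 + integral {0..1} (\<lambda>t. - cnj (Wd th t) / - cnj (W th t)) / (2*pi*\<i>)"
  proof (rule wind_mult_exp)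
    show "((\<lambda>t. - cnj (W th t)) has_vector_derivative - cnj (Wd th t)) (at t)" for t
      by (intro derivative_intros W_der[OF th])
    show "continuous_on {0..1} (\<lambda>t. - cnj (Wd th t))"
      by (intro continuous_intros Wd_cont[OF th])
    show "- cnj (W th t) \<noteq> 0" for t using W_nz[OF th] by simp
  qed
  also have "integral {0..1} (\<lambda>t. - cnj (Wd th t) / - cnj (W th t))
     = cnj (integral {0..1} (\<lambda>t. Wd th t / W th t))"
    by (simp add: integral_cnj)
  also have "\<dots> = - 2*pi*\<i> * mW"
  proof -
    have "cnj mW = mW" using mW_int by (metis Ints_cases complex_cnj_of_int)
    then show ?thesis using int_WdW[OF th] by simp
  qed
  finally show ?thesis by simp
qed

lemma index_north: assumes "of_int mi = mW"
  shows "poincare_index v northP = 1 + mi"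
  unfolding poincare_index_def
proof (rule the_index)
  fix r :: real assume r: "0 < r" "r < 1"
  have "(\<lambda>t. Complex (v (pole_loop (northP $ 3) r t) $ 1) (v (pole_loop (northP $ 3) r t) $ 2)) = Zc (arcsin r)"
    using pole_loop_N[OF r] by (simp add: Zc_def fun_eq_iff)
  then show "winding_number (\<lambda>t. Complex (v (pole_loop (northP $ 3) r t) $ 1) (v (pole_loop (northP $ 3) r t) $ 2)) 0
     = of_int (1 + mi)"
    using Zc_north[of "arcsin r"] arcsin_r[OF r] assms by simp
qed

lemma index_south: assumes "of_int mi = mW"
  shows "poincare_index v southP = 1 - mi"
  unfolding poincare_index_def
proof (rule the_index)
  fix r :: real assume r: "0 < r" "r < 1"
  have "(\<lambda>t. Complex (v (pole_loop (southP $ 3) r t) $ 1) (v (pole_loop (southP $ 3) r t) $ 2)) = Zc (pi - arcsin r)"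
    using pole_loop_S[OF r] by (simp add: Zc_def fun_eq_iff)
  then show "winding_number (\<lambda>t. Complex (v (pole_loop (southP $ 3) r t) $ 1) (v (pole_loop (southP $ 3) r t) $ 2)) 0
     = of_int (1 - mi)"
    using Zc_south[of "pi - arcsin r"] arcsin_r[OF r] assms by simp
qed

end


lemma nn_lower:
  fixes l h :: "real \<Rightarrow> real"
  assumes cl: "continuous_on {a..b} l" and lh: "\<And>t. t \<in> {a<..<b} \<Longrightarrow> l t \<le> h t"
  shows "ennreal (integral {a..b} l) \<le> (\<integral>\<^sup>+t. indicator {a<..<b} t * ennreal (h t) \<partial>lborel)"
proof -
  define l' where "l' = (\<lambda>t. max (l t) 0)"
  have cl': "continuous_on {a..b} l'" unfolding l'_def by (intro continuous_intros cl)
  have i1: "l integrable_on {a..b}" by (rule integrable_continuous_interval[OF cl])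
  have i2: "l' integrable_on {a..b}" by (rule integrable_continuous_interval[OF cl'])
  have le: "integral {a..b} l \<le> integral {a..b} l'"
    by (rule integral_le[OF i1 i2]) (simp add: l'_def)
  have hi: "(l' has_integral integral {a..b} l') {a<..<b}"
    using has_integral_open_interval[of l' "integral {a..b} l'" a b] i2 by (simp add: has_integral_integral)
  have eq: "(\<integral>\<^sup>+t. ennreal (l' t) * indicator {a<..<b} t \<partial>lborel) = ennreal (integral {a..b} l')"
    by (rule nn_integral_has_integral_lebesgue'[OF _ hi]) (simp add: l'_def)
  have "ennreal (integral {a..b} l) \<le> ennreal (integral {a..b} l')" using le by (rule ennreal_leI)
  also have "\<dots> = (\<integral>\<^sup>+t. ennreal (l' t) * indicator {a<..<b} t \<partial>lborel)" using eq by simp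
  also have "\<dots> \<le> (\<integral>\<^sup>+t. indicator {a<..<b} t * ennreal (h t) \<partial>lborel)"
  proof (rule nn_integral_mono)
    fix t show "ennreal (l' t) * indicator {a<..<b} t \<le> indicator {a<..<b} t * ennreal (h t)"
    proof (cases "t \<in> {a<..<b}")
      case True
      have "ennreal (l' t) \<le> ennreal (h t)"
      proof (cases "l t \<le> 0")
        case True then show ?thesis by (simp add: l'_def)
      next
        case False then show ?thesis using lh[OF \<open>t \<in> {a<..<b}\<close>] by (intro ennreal_leI) (simp add: l'_def)
      qed
      then show ?thesis using True by simp
    qed simp
  qed
  finally show ?thesis .
qed

lemma cs2: fixes s g G :: real
  shows "s^2 + G * g \<le> sqrt (s^2 + g^2) * sqrt (s^2 + G^2)"
proof -
  have "(s^2 + G * g)^2 \<le> (s^2 + g^2) * (s^2 + G^2)"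
  proof -
    have "0 \<le> s^2 * (g - G)^2" by simp
    then show ?thesis by (simp add: power2_eq_square algebra_simps)
  qed
  then have "\<bar>s^2 + G * g\<bar> \<le> sqrt ((s^2 + g^2) * (s^2 + G^2))"
    using real_le_rsqrt by (metis abs_le_square_iff real_sqrt_abs real_sqrt_le_iff)
  then show ?thesis by (simp add: real_sqrt_mult)
qed

context vfctx begin

lemma gfun_line: assumes th: "0 < th" "th < pi"
  shows "gfun th (2*pi*t) = Im (Wd th t / W th t) / (2*pi) + cos th"
proof -
  have g: "gfun th ph = A th ph * Bd th ph - B th ph * Ad th ph + cos th" for ph
    using gfun_eq[OF th, of ph] by (simp add: Ad_def Bd_def)
  have "A th (2*pi*t) * Bd th (2*pi*t) - B th (2*pi*t) * Ad th (2*pi*t) = Im (Wd th t / W th t) / (2*pi)"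
    using Im_WdW[OF th, of t] by simp
  then show ?thesis using g[of "2*pi*t"] by simp
qed

lemma int_gfun: assumes th: "0 < th" "th < pi" and mi: "of_int mi = mW"
  shows "integral {0..1} (\<lambda>t. gfun th (2*pi*t)) = mi + cos th"
proof -
  have cq: "continuous_on {0..1} (\<lambda>t. Wd th t / W th t)"
    by (intro continuous_intros Wd_cont[OF th] W_cont[OF th]) (use W_nz[OF th] in auto)
  have iq: "(\<lambda>t. Wd th t / W th t) integrable_on {0..1}" by (rule integrable_continuous_interval[OF cq])
  have "integral {0..1} (\<lambda>t. Im (Wd th t / W th t)) = Im (integral {0..1} (\<lambda>t. Wd th t / W th t))"
    using integral_linear[OF iq bounded_linear_Im] by (simp add: o_def)
  also have "\<dots> = 2*pi*mi" using int_WdW[OF th] mi[symmetric] by simp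
  finally have i1: "integral {0..1} (\<lambda>t. Im (Wd th t / W th t)) = 2*pi*mi" .
  have iIm: "(\<lambda>t. Im (Wd th t / W th t)) integrable_on {0..1}"
    using integrable_linear[OF iq bounded_linear_Im] by (simp add: o_def)
  have "integral {0..1} (\<lambda>t. gfun th (2*pi*t)) = integral {0..1} (\<lambda>t. Im (Wd th t / W th t) / (2*pi) + cos th)"
    using gfun_line[OF th] by simp
  also have "\<dots> = integral {0..1} (\<lambda>t. Im (Wd th t / W th t)) / (2*pi) + cos th"
    using Henstock_Kurzweil_Integration.integral_add[OF integrable_on_divide[OF iIm, of "2*pi"] integrable_const_ivl[of "cos th" 0 1]]
    by (simp add: integral_divide)
  finally show ?thesis using i1 by simp
qed

end


context vfctx begin

lemma gfun_cont_ph: assumes th: "0 < th" "th < pi"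
  shows "continuous_on X (\<lambda>ph. gfun th ph)"
proof -
  have c: "continuous_on X (\<lambda>ph. (th, ph))" by (intro continuous_intros)
  have sub: "(\<lambda>ph. (th, ph)) ` X \<subseteq> S0" using th by (auto simp: S0_def)
  from continuous_on_compose2[OF gfun_cont c sub] show ?thesis by simp
qed

lemma theta_bound:
  assumes th: "0 < th" "th < pi" and mi: "of_int mi = mW"
  shows "ennreal (2*pi * sqrt ((sin th)^2 + (mi + cos th)^2))
     \<le> (\<integral>\<^sup>+ph. indicator {0<..<2*pi} ph * ennreal (sqrt ((sin th)^2 + (gfun th ph)^2)) \<partial>lborel)"
proof -
  define s where "s = sin th"
  define G where "G = mi + cos th"
  define R where "R = sqrt (s^2 + G^2)"
  have s0: "s > 0" unfolding s_def using th sin_gt_zero by blast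
  have R0: "R > 0" unfolding R_def using s0 by (simp add: add_pos_nonneg)
  define h where "h = (\<lambda>ph. sqrt (s^2 + (gfun th ph)^2))"
  have hc: "continuous_on UNIV h" unfolding h_def by (intro continuous_intros gfun_cont_ph[OF th])
  have hm: "h \<in> borel_measurable borel" using borel_measurable_continuous_onI[OF hc] .
  define f where "f = (\<lambda>ph. indicator {0<..<2*pi} ph * ennreal (h ph))"
  have fm: "f \<in> borel_measurable borel" unfolding f_def using hm by measurable
  have aff: "(\<integral>\<^sup>+ph. f ph \<partial>lborel) = ennreal (2*pi) * (\<integral>\<^sup>+t. f (0 + 2*pi * t) \<partial>lborel)"
    using nn_integral_real_affine[OF fm, of "2*pi" 0] by (simp add: ennreal_mult)
  have f2: "f (0 + 2*pi*t) = indicator {0<..<1} t * ennreal (h (2*pi*t))" for t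
  proof -
    have "(2*pi*t \<in> {0<..<2*pi}) = (t \<in> {0<..<1})" by (auto simp: zero_less_mult_iff)
    then show ?thesis unfolding f_def by (simp add: indicator_def)
  qed
  define l where "l = (\<lambda>t. s^2 / R + (G / R) * gfun th (2*pi*t))"
  have lc: "continuous_on {0..1} l" unfolding l_def
    by (intro continuous_intros cont_line[OF gfun_cont th])
  have lh: "l t \<le> h (2*pi*t)" for t
  proof -
    have "s^2 + G * gfun th (2*pi*t) \<le> sqrt (s^2 + (gfun th (2*pi*t))^2) * R"
      unfolding R_def by (rule cs2)
    then show ?thesis unfolding l_def h_def using R0 by (simp add: field_simps)
  qed
  have il: "integral {0..1} l = R"
  proof -
    have ig: "(\<lambda>t. gfun th (2*pi*t)) integrable_on {0..1}"
      by (rule integrable_continuous_interval) (intro cont_line[OF gfun_cont th])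
    have "integral {0..1} l = s^2 / R + (G / R) * integral {0..1} (\<lambda>t. gfun th (2*pi*t))"
      unfolding l_def
      using Henstock_Kurzweil_Integration.integral_add[OF integrable_const_ivl[of "s^2/R" 0 1] integrable_on_mult_right[OF ig, of "G/R"]]
      by simp
    also have "\<dots> = s^2 / R + (G / R) * G" using int_gfun[OF th mi] by (simp add: G_def)
    also have "\<dots> = (s^2 + G^2) / R" by (simp add: power2_eq_square add_divide_distrib)
    also have "\<dots> = R"
    proof -
      have "s^2 + G^2 \<ge> 0" by simp
      then have "(s^2 + G^2) = R * R" unfolding R_def by simp
      then show ?thesis using R0 by simp
    qed
    finally show ?thesis .
  qed
  have "ennreal R \<le> (\<integral>\<^sup>+t. indicator {0<..<1} t * ennreal (h (2*pi*t)) \<partial>lborel)"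
    using nn_lower[OF lc, of "\<lambda>t. h (2*pi*t)"] lh il by simp
  then have "ennreal (2*pi) * ennreal R \<le> ennreal (2*pi) * (\<integral>\<^sup>+t. f (0 + 2*pi * t) \<partial>lborel)"
    using f2 by (simp add: mult_left_mono)
  then have "ennreal (2*pi*R) \<le> (\<integral>\<^sup>+ph. f ph \<partial>lborel)"
    using aff R0 by (simp add: ennreal_mult)
  then show ?thesis unfolding f_def h_def R_def s_def G_def .
qed

end


definition fq :: "real \<Rightarrow> real \<Rightarrow> real" where "fq q u = sqrt (1 + q^2 + 2*q*cos u)"

lemma fq_cont: "continuous_on X (fq q)"
  unfolding fq_def[abs_def] by (intro continuous_intros)

lemma fq_int: "fq q integrable_on {a..b}"
  by (rule integrable_continuous_interval[OF fq_cont])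

lemma fq_per: "fq q (x + 2*pi) = fq q x" "fq q (2*pi + x) = fq q x" "fq q (-x) = fq q x"
  by (simp_all add: fq_def add.commute[of "2*pi"])

lemma fq_shift: "integral {a+2*pi..b+2*pi} (fq q) = integral {a..b} (fq q)"
proof -
  have "fq q \<circ> (+) (2*pi) = fq q" by (simp add: fun_eq_iff fq_per)
  then show ?thesis using integral_shift_Icc_real[of a b "fq q" "2*pi"] by simp
qed

lemma fq_refl: "integral {-pi..0} (fq q) = integral {0..pi} (fq q)"
proof -
  have "(\<lambda>x. fq q (-x)) = fq q" by (simp add: fun_eq_iff fq_per)
  then show ?thesis using Henstock_Kurzweil_Integration.integral_reflect_real[of pi 0 "fq q"] by (simp only: minus_zero)
qed

lemma fq_four: "integral {-pi..3*pi} (fq q) = 4 * integral {0..pi} (fq q)"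
proof -
  have s1: "integral {pi..2*pi} (fq q) = integral {0..pi} (fq q)"
    using fq_shift[of "-pi" 0 q] fq_refl by simp
  have s2: "integral {2*pi..3*pi} (fq q) = integral {0..pi} (fq q)"
    using fq_shift[of 0 pi q] by simp
  have "integral {-pi..3*pi} (fq q) = integral {-pi..0} (fq q) + integral {0..3*pi} (fq q)"
    by (rule Henstock_Kurzweil_Integration.integral_combine[symmetric]) (auto intro: fq_int)
  also have "integral {0..3*pi} (fq q) = integral {0..pi} (fq q) + integral {pi..3*pi} (fq q)"
    by (rule Henstock_Kurzweil_Integration.integral_combine[symmetric]) (auto intro: fq_int)
  also have "integral {pi..3*pi} (fq q) = integral {pi..2*pi} (fq q) + integral {2*pi..3*pi} (fq q)"
    by (rule Henstock_Kurzweil_Integration.integral_combine[symmetric]) (auto intro: fq_int)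
  finally show ?thesis using s1 s2 fq_refl by simp
qed

lemma ellipse_fq: assumes "q \<ge> 0"
  shows "ellipse_length (1 + q) (q - 1) = 2 * integral {0..pi} (fq q)"
proof -
  have hi: "(fq q has_integral integral {-pi..3*pi} (fq q)) (cbox (-pi) (3*pi))"
    using fq_int by (simp add: has_integral_integral)
  have "((\<lambda>x. fq q (2 *\<^sub>R x + - pi)) has_integral (integral {-pi..3*pi} (fq q) /\<^sub>R 2 ^ DIM(real)))
      (cbox ((-pi - - pi) /\<^sub>R 2) ((3*pi - - pi) /\<^sub>R 2))"
    by (rule has_integral_affinity'[OF hi]) simp
  then have h2: "((\<lambda>x. fq q (2 * x - pi)) has_integral (2 * integral {0..pi} (fq q))) {0..2*pi}"
    by (simp add: fq_four)
  have eq: "sqrt (((1 + q) * sin t)^2 + ((q - 1) * cos t)^2) = fq q (2 * t - pi)" for t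
  proof -
    have c: "cos (2 * t - pi) = sin t ^ 2 - cos t ^ 2"
      by (simp add: cos_diff cos_double)
    have ssc: "sin t * sin t + cos t * cos t = 1" using sin_cos_squared_add[of t] by (simp add: power2_eq_square)
    have "((1 + q) * sin t)^2 + ((q - 1) * cos t)^2 = 1 + q^2 + 2*q*cos (2*t - pi)"
      unfolding c power2_eq_square using ssc by algebra
    then show ?thesis by (simp add: fq_def)
  qed
  show ?thesis unfolding ellipse_length_def eq using h2 by (simp add: integral_unique)
qed

lemma fq_neg: "integral {0..pi} (fq (-q)) = integral {0..pi} (fq q)"
proof -
  have "fq (-q) = fq q \<circ> (+) pi" by (simp add: fun_eq_iff fq_def)
  then have "integral {0..pi} (fq (-q)) = integral {pi..2*pi} (fq q)"
    using integral_shift_Icc_real[of 0 pi "fq q" pi] by (simp add: add.commute)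
  also have "\<dots> = integral {0..pi} (fq q)" using fq_shift[of "-pi" 0 q] fq_refl by simp
  finally show ?thesis .
qed

lemma final_integral:
  fixes mi :: int
  shows "pi * ellipse_length (real_of_int (1 + \<bar>mi\<bar>)) (real_of_int (1 + \<bar>mi\<bar>) - 2)
    = integral {0..pi} (\<lambda>th. 2*pi * sqrt ((sin th)^2 + (mi + cos th)^2))"
proof -
  have e: "sqrt ((sin th)^2 + (mi + cos th)^2) = fq mi th" for th
  proof -
    have "(sin th)^2 + (mi + cos th)^2 = 1 + mi^2 + 2*mi*cos th"
      using sin_cos_squared_add[of th] by (simp add: power2_eq_square algebra_simps)
    then show ?thesis by (simp add: fq_def)
  qed
  have a: "integral {0..pi} (fq mi) = integral {0..pi} (fq \<bar>mi\<bar>)"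
    using fq_neg[of "real_of_int mi"] by (cases "mi \<ge> 0") simp_all
  have "pi * ellipse_length (real_of_int (1 + \<bar>mi\<bar>)) (real_of_int (1 + \<bar>mi\<bar>) - 2)
      = pi * ellipse_length (1 + \<bar>real_of_int mi\<bar>) (\<bar>real_of_int mi\<bar> - 1)" by simp
  also have "\<dots> = 2 * pi * integral {0..pi} (fq mi)" using ellipse_fq[of "\<bar>real_of_int mi\<bar>"] a by simp
  also have "\<dots> = integral {0..pi} (\<lambda>th. 2*pi * fq mi th)" by simp
  finally show ?thesis unfolding e .
qed


context vfctx begin

lemma vol_lower:
  assumes mi: "of_int mi = mW"
  shows "(\<integral>\<^sup>+th. indicator {0<..<pi} th * ennreal (2*pi * sqrt ((sin th)^2 + (mi + cos th)^2)) \<partial>lborel)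
     \<le> vol_vf v"
proof -
  define B0 :: "(real \<times> real) set" where "B0 = {0<..<pi} \<times> {0<..<2*pi}"
  define q where "q = (\<lambda>x::real\<times>real. sqrt ((sin (fst x))^2 + (gfun (fst x) (snd x))^2))"
  define Hf where "Hf = (\<lambda>x. indicator B0 x * ennreal (q x))"
  have B0S: "B0 \<subseteq> S0" by (auto simp: B0_def S0_def)
  have oB: "open B0" unfolding B0_def by (intro open_Times) auto
  have qc: "continuous_on B0 q" unfolding q_def
    by (intro continuous_intros continuous_on_subset[OF gfun_cont B0S])
  have m1: "(\<lambda>x. indicator B0 x *\<^sub>R q x) \<in> borel_measurable borel"
    by (rule borel_measurable_continuous_on_indicator[OF _ qc]) (use oB in auto)
  have "(\<lambda>x. ennreal (indicator B0 x *\<^sub>R q x)) \<in> borel_measurable borel"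
    using m1 by measurable
  moreover have "Hf = (\<lambda>x. ennreal (indicator B0 x *\<^sub>R q x))"
    by (auto simp: Hf_def fun_eq_iff indicator_def)
  ultimately have Hm: "Hf \<in> borel_measurable borel" by simp
  have step1: "(\<integral>\<^sup>+x. Hf x \<partial>lborel) \<le> vol_vf v"
    unfolding vol_vf_def sphere_nn_integral_def
  proof (rule nn_integral_mono)
    fix x :: "real \<times> real"
    show "Hf x \<le> indicator ({0<..<pi} \<times> {0<..<2*pi}) x *
        ennreal (sqrt (1 + (gamma_vf v (sph x))\<^sup>2 + (delta_vf v (sph x))\<^sup>2) * sin (fst x))"
    proof (cases "x \<in> B0")
      case True
      obtain th ph where x: "x = (th, ph)" by fastforce
      have th: "0 < th" "th < pi" using True by (auto simp: x B0_def)
      have p: "sph (th,ph) \<in> Mset" by (rule sph_Mset[OF th])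
      have "sqrt ((sin th)^2 + (Dv v (sph (th,ph)) (sin th *\<^sub>R E2 ph) \<bullet> vperp v (sph (th,ph)))^2)
          \<le> sqrt (1 + (gamma_vf v (sph (th,ph)))^2 + (delta_vf v (sph (th,ph)))^2) * sin th"
        by (rule pointwise_ineq[OF th refl dU]) (use p MU unit in auto)
      moreover have "(Dv v (sph (th,ph)) (sin th *\<^sub>R E2 ph) \<bullet> vperp v (sph (th,ph)))^2 = (gfun th ph)^2"
        by (simp add: gfun_def Vd_def)
      ultimately have "q x \<le> sqrt (1 + (gamma_vf v (sph x))\<^sup>2 + (delta_vf v (sph x))\<^sup>2) * sin (fst x)"
        by (simp add: q_def x)
      then show ?thesis using True by (simp add: Hf_def B0_def[symmetric] ennreal_leI)
    qed (simp add: Hf_def)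
  qed
  have Hm2: "Hf \<in> borel_measurable (lborel \<Otimes>\<^sub>M lborel)"
    using Hm by (simp add: lborel_prod)
  have step2: "(\<integral>\<^sup>+th. \<integral>\<^sup>+ph. Hf (th, ph) \<partial>lborel \<partial>lborel) = (\<integral>\<^sup>+x. Hf x \<partial>lborel)"
    using lborel.nn_integral_fst[OF Hm2] by (simp add: lborel_prod)
  have step3: "(\<integral>\<^sup>+th. indicator {0<..<pi} th * ennreal (2*pi * sqrt ((sin th)^2 + (mi + cos th)^2)) \<partial>lborel)
      \<le> (\<integral>\<^sup>+th. \<integral>\<^sup>+ph. Hf (th, ph) \<partial>lborel \<partial>lborel)"
  proof (rule nn_integral_mono)
    fix th :: real
    show "indicator {0<..<pi} th * ennreal (2*pi * sqrt ((sin th)^2 + (mi + cos th)^2))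
        \<le> (\<integral>\<^sup>+ph. Hf (th, ph) \<partial>lborel)"
    proof (cases "th \<in> {0<..<pi}")
      case True
      then have th: "0 < th" "th < pi" by auto
      have "Hf (th, ph) = indicator {0<..<2*pi} ph * ennreal (sqrt ((sin th)^2 + (gfun th ph)^2))" for ph
        using True by (simp add: Hf_def q_def B0_def indicator_def)
      then show ?thesis using theta_bound[OF th mi] True by simp
    qed simp
  qed
  show ?thesis using step1 step2 step3 by simp
qed

end

lemma nn_to_integral:
  fixes F :: "real \<Rightarrow> real"
  assumes "continuous_on {a..b} F" "\<And>x. 0 \<le> F x"
  shows "(\<integral>\<^sup>+x. indicator {a<..<b} x * ennreal (F x) \<partial>lborel) = ennreal (integral {a..b} F)"
proof -
  have i: "F integrable_on {a..b}" by (rule integrable_continuous_interval[OF assms(1)])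
  have hi: "(F has_integral integral {a..b} F) {a<..<b}"
    using has_integral_open_interval[of F "integral {a..b} F" a b] i by (simp add: has_integral_integral)
  have "(\<integral>\<^sup>+x. ennreal (F x) * indicator {a<..<b} x \<partial>lborel) = ennreal (integral {a..b} F)"
    by (rule nn_integral_has_integral_lebesgue'[OF _ hi]) (use assms(2) in auto)
  then show ?thesis by (simp add: mult.commute)
qed

theorem theorem1:
  fixes v :: "real^3 \<Rightarrow> real^3" and k :: int
  assumes "smooth_unit_vf v"
    and "k = max (poincare_index v northP) (poincare_index v southP)"
    and "k > 2"
  shows "vol_vf v \<ge> ennreal (pi * ellipse_length (real_of_int k) (real_of_int k - 2))"
proof -
  obtain U where MU: "Mset \<subseteq> U" and sm: "smooth_on U v"
    and unit: "\<And>p. p \<in> Mset \<Longrightarrow> norm (v p) = 1 \<and> v p \<bullet> p = 0"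
    using assms(1) unfolding smooth_unit_vf_def by blast
  have oU: "open U" and c1: "Ck_on 1 U v" using sm unfolding smooth_on_def by auto
  have ctx: "vfctx v U"
    by (unfold_locales) (use oU MU c1 unit in auto)
  interpret vfctx v U by (rule ctx)
  obtain mi where mi: "mW = of_int mi" using mW_int by (auto elim: Ints_cases)
  have kk: "k = 1 + \<bar>mi\<bar>"
    using assms(2) index_north[OF mi[symmetric]] index_south[OF mi[symmetric]] by auto
  have cF: "continuous_on {0..pi} (\<lambda>th. 2*pi * sqrt ((sin th)^2 + (mi + cos th)^2))"
    by (intro continuous_intros)
  have "ennreal (pi * ellipse_length (real_of_int k) (real_of_int k - 2))
      = ennreal (integral {0..pi} (\<lambda>th. 2*pi * sqrt ((sin th)^2 + (mi + cos th)^2)))"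
    unfolding kk final_integral ..
  also have "\<dots> = (\<integral>\<^sup>+th. indicator {0<..<pi} th * ennreal (2*pi * sqrt ((sin th)^2 + (mi + cos th)^2)) \<partial>lborel)"
    by (rule nn_to_integral[OF cF, symmetric]) simp
  also have "\<dots> \<le> vol_vf v" by (rule vol_lower[OF mi[symmetric]])
  finally show ?thesis .
qed

end
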